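(* Let $F$ and $H$ be two CNF formulae that do not share variables and are both unsatisfiable. Then the tree obtained from an optimal backtracking search tree of $F$ by replacing every empty subtree with an optimal backtracking search tree of $H$ is an optimal backtracking search tree of the product $F \cdot H = \{\gamma \vee \delta \mid \gamma \in F,\ \delta \in H\}$.
   Context: A CNF formula is a finite set of clauses (disjunctions of literals); the empty clause is unsatisfiable. For a partial truth assignment $I$ (a set of literals), $F|I$ is obtained from $F$ by deleting every clause containing a literal true under $I$ and deleting from the remaining clauses every literal false under $I$. $Var(F)$ is the set of variables of $F$. A binary tree is either the empty tree $()$ or a triple $(x~T_1~T_2)$ with root labelled $x$, left subtree $T_1$, right subtree $T_2$; its size is its number of nodes; the "empty subtrees" of a tree are all occurrences of $()$ inside it. A backtracking search tree (BST) of $F$ is: the empty tree if $F$ contains the empty clause; otherwise $(x~T_1~T_2)$ with $x \in Var(F)$, $T_1$ a BST of $F|\{\neg x\}$, $T_2$ a BST of $F|\{x\}$. An optimal BST is one of minimum size. *)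

theory Defs
  imports Main
begin

datatype 'v lit = Pos 'v | Neg 'v

fun var :: "'v lit \<Rightarrow> 'v" where
  "var (Pos x) = x" | "var (Neg x) = x"

fun compl :: "'v lit \<Rightarrow> 'v lit" where
  "compl (Pos x) = Neg x" | "compl (Neg x) = Pos x"

type_synonym 'v clause = "'v lit set"
type_synonym 'v cnf = "'v clause set"

definition is_cnf :: "'v cnf \<Rightarrow> bool" where
  "is_cnf F \<longleftrightarrow> finite F \<and> (\<forall>C\<in>F. finite C)"

definition Var :: "'v cnf \<Rightarrow> 'v set" where
  "Var F = {var l | l C. C \<in> F \<and> l \<in> C}"

fun lit_val :: "('v \<Rightarrow> bool) \<Rightarrow> 'v lit \<Rightarrow> bool" where
  "lit_val a (Pos x) = a x" | "lit_val a (Neg x) = (\<not> a x)"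

definition satisfiable :: "'v cnf \<Rightarrow> bool" where
  "satisfiable F \<longleftrightarrow> (\<exists>a. \<forall>C\<in>F. \<exists>l\<in>C. lit_val a l)"

definition restrict :: "'v cnf \<Rightarrow> 'v lit set \<Rightarrow> 'v cnf" where
  "restrict F I = {C - {l. compl l \<in> I} | C. C \<in> F \<and> C \<inter> I = {}}"

definition product :: "'v cnf \<Rightarrow> 'v cnf \<Rightarrow> 'v cnf" where
  "product F H = {C \<union> D | C D. C \<in> F \<and> D \<in> H}"

datatype 'v tree = Leaf | Node 'v "'v tree" "'v tree"

fun tsize :: "'v tree \<Rightarrow> nat" where
  "tsize Leaf = 0"
| "tsize (Node x l r) = tsize l + tsize r + 1"

inductive bst :: "'v cnf \<Rightarrow> 'v tree \<Rightarrow> bool" where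
  bst_leaf: "{} \<in> F \<Longrightarrow> bst F Leaf"
| bst_node: "{} \<notin> F \<Longrightarrow> x \<in> Var F \<Longrightarrow> bst (restrict F {Neg x}) T1
     \<Longrightarrow> bst (restrict F {Pos x}) T2 \<Longrightarrow> bst F (Node x T1 T2)"

definition optimal_bst :: "'v cnf \<Rightarrow> 'v tree \<Rightarrow> bool" where
  "optimal_bst F T \<longleftrightarrow> bst F T \<and> (\<forall>T'. bst F T' \<longrightarrow> tsize T \<le> tsize T')"

fun graft :: "'v tree \<Rightarrow> 'v tree \<Rightarrow> 'v tree" where
  "graft Leaf S = S"
| "graft (Node x l r) S = Node x (graft l S) (graft r S)"

end

theory Submission
  imports Defs
begin

lemma var_compl[simp]: "var (compl l) = var l"
  by (cases l) auto

lemma compl_eq_var: "compl l' = l \<Longrightarrow> var l' = var l"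
  by (cases l') auto

lemma restrict_product:
  "restrict (product F H) I = product (restrict F I) (restrict H I)"
proof (rule set_eqI, rule iffI)
  fix E assume "E \<in> restrict (product F H) I"
  then obtain C D where cd: "C \<in> F" "D \<in> H" "(C \<union> D) \<inter> I = {}" "E = (C \<union> D) - {l. compl l \<in> I}"
    unfolding restrict_def product_def by blast
  have "C - {l. compl l \<in> I} \<in> restrict F I" using cd unfolding restrict_def by auto
  moreover have "D - {l. compl l \<in> I} \<in> restrict H I" using cd unfolding restrict_def by auto
  moreover have "E = (C - {l. compl l \<in> I}) \<union> (D - {l. compl l \<in> I})" using cd by auto
  ultimately show "E \<in> product (restrict F I) (restrict H I)" unfolding product_def by blast
next
  fix E assume "E \<in> product (restrict F I) (restrict H I)"
  then obtain C D where cd: "C \<in> F" "D \<in> H" "C \<inter> I = {}" "D \<inter> I = {}" "E = (C - {l. compl l \<in> I}) \<union> (D - {l. compl l \<in> I})"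
    unfolding restrict_def product_def by blast
  have "C \<union> D \<in> product F H" using cd unfolding product_def by blast
  moreover have "(C \<union> D) \<inter> I = {}" using cd by auto
  moreover have "E = (C \<union> D) - {l. compl l \<in> I}" using cd by auto
  ultimately show "E \<in> restrict (product F H) I" unfolding restrict_def by blast
qed

lemma restrict_notvar:
  assumes "var l \<notin> Var F" shows "restrict F {l} = F"
proof -
  have "C \<inter> {l} = {} \<and> C - {l'. compl l' \<in> {l}} = C" if "C \<in> F" for C
  proof -
    have "l \<notin> C" using that assms unfolding Var_def by blast
    moreover have "l' \<notin> C" if "compl l' = l" for l'
    proof
      assume "l' \<in> C"
      then have "var l' \<in> Var F" using \<open>C \<in> F\<close> unfolding Var_def by blast
      then show False using compl_eq_var[OF that] assms by simp
    qed
    ultimately show ?thesis by auto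
  qed
  then show ?thesis unfolding restrict_def by force
qed

lemma VarI: "C \<in> F \<Longrightarrow> l \<in> C \<Longrightarrow> var l \<in> Var F"
  unfolding Var_def by blast

lemma VarE: "v \<in> Var F \<Longrightarrow> (\<And>C l. C \<in> F \<Longrightarrow> l \<in> C \<Longrightarrow> v = var l \<Longrightarrow> P) \<Longrightarrow> P"
  unfolding Var_def by blast

lemma restrictE: "E \<in> restrict F I \<Longrightarrow> (\<And>C. C \<in> F \<Longrightarrow> E = C - {l. compl l \<in> I} \<Longrightarrow> P) \<Longrightarrow> P"
  unfolding restrict_def by blast

lemma productE: "E \<in> product F H \<Longrightarrow> (\<And>C D. C \<in> F \<Longrightarrow> D \<in> H \<Longrightarrow> E = C \<union> D \<Longrightarrow> P) \<Longrightarrow> P"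
  unfolding product_def by blast

lemma productI: "C \<in> F \<Longrightarrow> D \<in> H \<Longrightarrow> C \<union> D \<in> product F H"
  unfolding product_def by blast

lemma Var_restrict: "Var (restrict F I) \<subseteq> Var F"
proof
  fix v assume "v \<in> Var (restrict F I)"
  then obtain E l where "E \<in> restrict F I" "l \<in> E" "v = var l" by (rule VarE)
  then obtain C where "C \<in> F" "E = C - {l. compl l \<in> I}" by (auto elim: restrictE)
  then show "v \<in> Var F" using \<open>l \<in> E\<close> \<open>v = var l\<close> VarI by auto
qed

lemma Var_product: "Var (product F H) \<subseteq> Var F \<union> Var H"
proof
  fix v assume "v \<in> Var (product F H)"
  then obtain E l where "E \<in> product F H" "l \<in> E" "v = var l" by (rule VarE)
  then obtain C D where "C \<in> F" "D \<in> H" "E = C \<union> D" by (auto elim: productE)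
  then show "v \<in> Var F \<union> Var H" using \<open>l \<in> E\<close> \<open>v = var l\<close> VarI by auto
qed

lemma Var_product1: "H \<noteq> {} \<Longrightarrow> Var F \<subseteq> Var (product F H)"
proof
  fix v assume "H \<noteq> {}" "v \<in> Var F"
  from \<open>v \<in> Var F\<close> obtain C l where "C \<in> F" "l \<in> C" "v = var l" by (rule VarE)
  obtain D where "D \<in> H" using \<open>H \<noteq> {}\<close> by auto
  have "C \<union> D \<in> product F H" using productI \<open>C \<in> F\<close> \<open>D \<in> H\<close> .
  then show "v \<in> Var (product F H)" using VarI[of "C \<union> D" _ l] \<open>l \<in> C\<close> \<open>v = var l\<close> by auto
qed

lemma Var_mono: "F \<subseteq> G \<Longrightarrow> Var F \<subseteq> Var G"
  by (auto elim!: VarE intro: VarI)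

lemma empty_restrict: "{} \<in> F \<Longrightarrow> {} \<in> restrict F I"
  unfolding restrict_def by blast

lemma empty_product: "{} \<in> product F H \<longleftrightarrow> {} \<in> F \<and> {} \<in> H"
proof
  assume "{} \<in> product F H"
  then obtain C D where "C \<in> F" "D \<in> H" "{} = C \<union> D" by (rule productE)
  then show "{} \<in> F \<and> {} \<in> H" by simp
next
  assume "{} \<in> F \<and> {} \<in> H"
  then show "{} \<in> product F H" using productI[of "{}" F "{}" H] by simp
qed

lemma product_sub: "product F H \<subseteq> product H F"
proof
  fix E assume "E \<in> product F H"
  then obtain C D where "C \<in> F" "D \<in> H" "E = C \<union> D" by (rule productE)
  then show "E \<in> product H F" using productI[of D H C F] by (simp add: Un_commute)
qed

lemma product_comm: "product F H = product H F"
  using product_sub[of F H] product_sub[of H F] by (rule subset_antisym)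

lemma sub_product: "{} \<in> F \<Longrightarrow> H \<subseteq> product F H"
  using productI[of "{}" F _ H] by auto

lemma lemA: "bst H T \<Longrightarrow> {} \<in> F \<Longrightarrow> bst (product F H) T"
proof (induction H T arbitrary: F rule: bst.induct)
  case (bst_leaf H)
  then show ?case by (auto intro: bst.bst_leaf simp: empty_product)
next
  case (bst_node H x T1 T2)
  show ?case
  proof (rule bst.bst_node)
    show "{} \<notin> product F H" using bst_node.hyps(1) by (simp add: empty_product)
    show "x \<in> Var (product F H)" using bst_node.hyps(2) Var_mono[OF sub_product[OF bst_node.prems]] by blast
    show "bst (restrict (product F H) {Neg x}) T1"
      unfolding restrict_product by (rule bst_node.IH(1)[OF empty_restrict[OF bst_node.prems]])
    show "bst (restrict (product F H) {Pos x}) T2"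
      unfolding restrict_product by (rule bst_node.IH(2)[OF empty_restrict[OF bst_node.prems]])
  qed
qed

lemma lemB: "bst F T \<Longrightarrow> H \<noteq> {} \<Longrightarrow> Var F \<inter> Var H = {} \<Longrightarrow> bst H S
  \<Longrightarrow> bst (product F H) (graft T S)"
proof (induction F T rule: bst.induct)
  case (bst_leaf F)
  have "bst (product F H) S" by (rule lemA[OF bst_leaf.prems(3) bst_leaf.hyps])
  then show ?case by simp
next
  case (bst_node F x T1 T2)
  have xH: "x \<notin> Var H" using bst_node.hyps(2) bst_node.prems(2) by blast
  have rH: "restrict H {Neg x} = H" "restrict H {Pos x} = H"
    using restrict_notvar[of "Neg x" H] restrict_notvar[of "Pos x" H] xH by simp_all
  have d1: "Var (restrict F {Neg x}) \<inter> Var H = {}" "Var (restrict F {Pos x}) \<inter> Var H = {}"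
    using Var_restrict[of F "{Neg x}"] Var_restrict[of F "{Pos x}"] bst_node.prems(2) by blast+
  show ?case
    unfolding graft.simps
  proof (rule bst.bst_node)
    show "{} \<notin> product F H" using bst_node.hyps(1) by (simp add: empty_product)
    show "x \<in> Var (product F H)" using bst_node.hyps(2) Var_product1[OF bst_node.prems(1)] by blast
    show "bst (restrict (product F H) {Neg x}) (graft T1 S)"
      unfolding restrict_product rH by (rule bst_node.IH(1)[OF bst_node.prems(1) d1(1) bst_node.prems(3)])
    show "bst (restrict (product F H) {Pos x}) (graft T2 S)"
      unfolding restrict_product rH by (rule bst_node.IH(2)[OF bst_node.prems(1) d1(2) bst_node.prems(3)])
  qed
qed

lemma step:
  assumes xF: "x \<in> Var F" and xH: "x \<notin> Var H"
    and P1: "\<exists>A B. bst (restrict F {Neg x}) A \<and> bst H B \<and> (tsize A + 1) * (tsize B + 1) \<le> t1 + 1"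
    and P2: "\<exists>A B. bst (restrict F {Pos x}) A \<and> bst H B \<and> (tsize A + 1) * (tsize B + 1) \<le> t2 + 1"
  shows "\<exists>A B. bst F A \<and> bst H B \<and> (tsize A + 1) * (tsize B + 1) \<le> t1 + t2 + 1 + 1"
proof -
  obtain A1 B1 where 1: "bst (restrict F {Neg x}) A1" "bst H B1" "(tsize A1 + 1) * (tsize B1 + 1) \<le> t1 + 1"
    using P1 by blast
  obtain A2 B2 where 2: "bst (restrict F {Pos x}) A2" "bst H B2" "(tsize A2 + 1) * (tsize B2 + 1) \<le> t2 + 1"
    using P2 by blast
  show ?thesis
  proof (cases "{} \<in> F")
    case True
    have "bst F Leaf" using True by (rule bst.bst_leaf)
    moreover have "(tsize (Leaf::'a tree) + 1) * (tsize B1 + 1) \<le> t1 + t2 + 1 + 1"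
      using 1(3) by (simp add: le_trans[OF _ 1(3)])
    ultimately show ?thesis using 1 by blast
  next
    case False
    have bF: "bst F (Node x A1 A2)" using False xF 1 2 by (blast intro: bst.bst_node)
    show ?thesis
    proof (cases "tsize B1 \<le> tsize B2")
      case True
      have "(tsize A2 + 1) * (tsize B1 + 1) \<le> (tsize A2 + 1) * (tsize B2 + 1)"
        using True by (intro mult_le_mono2) simp
      moreover have "(tsize (Node x A1 A2) + 1) * (tsize B1 + 1) = (tsize A1 + 1) * (tsize B1 + 1) + (tsize A2 + 1) * (tsize B1 + 1)"
        by (simp add: algebra_simps)
      ultimately have "(tsize (Node x A1 A2) + 1) * (tsize B1 + 1) \<le> t1 + t2 + 1 + 1"
        using 1(3) 2(3) by linarith
      then show ?thesis using bF 1 by blast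
    next
      case False
      have "(tsize A1 + 1) * (tsize B2 + 1) \<le> (tsize A1 + 1) * (tsize B1 + 1)"
        using False by (intro mult_le_mono2) simp
      moreover have "(tsize (Node x A1 A2) + 1) * (tsize B2 + 1) = (tsize A1 + 1) * (tsize B2 + 1) + (tsize A2 + 1) * (tsize B2 + 1)"
        by (simp add: algebra_simps)
      ultimately have "(tsize (Node x A1 A2) + 1) * (tsize B2 + 1) \<le> t1 + t2 + 1 + 1"
        using 1(3) 2(3) by linarith
      then show ?thesis using bF 2 by blast
    qed
  qed
qed

lemma lemC: "bst G T \<Longrightarrow> G = product F H \<Longrightarrow> Var F \<inter> Var H = {}
  \<Longrightarrow> \<exists>A B. bst F A \<and> bst H B \<and> (tsize A + 1) * (tsize B + 1) \<le> tsize T + 1"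
proof (induction G T arbitrary: F H rule: bst.induct)
  case (bst_leaf G)
  have "{} \<in> product F H" using bst_leaf.hyps bst_leaf.prems(1) by simp
  then have "{} \<in> F" "{} \<in> H" by (simp_all add: empty_product)
  then have "bst F Leaf" "bst H Leaf" by (simp_all add: bst.bst_leaf)
  moreover have "(tsize Leaf + 1) * (tsize Leaf + 1) \<le> tsize Leaf + 1" by simp
  ultimately show ?case by blast
next
  case (bst_node G x T1 T2)
  have "x \<in> Var (product F H)" using bst_node.hyps(2) bst_node.prems(1) by simp
  then have x: "x \<in> Var F \<union> Var H" using Var_product[of F H] by blast
  show ?case
  proof (cases "x \<in> Var F")
    case True
    then have xH: "x \<notin> Var H" using bst_node.prems(2) by blast
    have rH: "restrict H {Neg x} = H" "restrict H {Pos x} = H"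
      using restrict_notvar[of "Neg x" H] restrict_notvar[of "Pos x" H] xH by simp_all
    have d1: "Var (restrict F {Neg x}) \<inter> Var H = {}" "Var (restrict F {Pos x}) \<inter> Var H = {}"
      using Var_restrict[of F "{Neg x}"] Var_restrict[of F "{Pos x}"] bst_node.prems(2) by blast+
    have e1: "restrict G {Neg x} = product (restrict F {Neg x}) H"
      using restrict_product[of F H "{Neg x}"] rH bst_node.prems(1) by simp
    have e2: "restrict G {Pos x} = product (restrict F {Pos x}) H"
      using restrict_product[of F H "{Pos x}"] rH bst_node.prems(1) by simp
    have "\<exists>A B. bst F A \<and> bst H B \<and> (tsize A + 1) * (tsize B + 1) \<le> tsize T1 + tsize T2 + 1 + 1"
      by (rule step[OF True xH bst_node.IH(1)[OF e1 d1(1)] bst_node.IH(2)[OF e2 d1(2)]])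
    then show ?thesis by simp
  next
    case False
    then have xH: "x \<in> Var H" "x \<notin> Var F" using x by blast+
    have rF: "restrict F {Neg x} = F" "restrict F {Pos x} = F"
      using restrict_notvar[of "Neg x" F] restrict_notvar[of "Pos x" F] xH by simp_all
    have d1: "Var (restrict H {Neg x}) \<inter> Var F = {}" "Var (restrict H {Pos x}) \<inter> Var F = {}"
      using Var_restrict[of H "{Neg x}"] Var_restrict[of H "{Pos x}"] bst_node.prems(2) by blast+
    have e1: "restrict G {Neg x} = product (restrict H {Neg x}) F"
      using restrict_product[of F H "{Neg x}"] rF bst_node.prems(1) product_comm[of F "restrict H {Neg x}"] by simp
    have e2: "restrict G {Pos x} = product (restrict H {Pos x}) F"
      using restrict_product[of F H "{Pos x}"] rF bst_node.prems(1) product_comm[of F "restrict H {Pos x}"] by simp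
    have "\<exists>A B. bst H A \<and> bst F B \<and> (tsize A + 1) * (tsize B + 1) \<le> tsize T1 + tsize T2 + 1 + 1"
      by (rule step[OF xH bst_node.IH(1)[OF e1 d1(1)] bst_node.IH(2)[OF e2 d1(2)]])
    then obtain A B where "bst H A" "bst F B" "(tsize A + 1) * (tsize B + 1) \<le> tsize T1 + tsize T2 + 1 + 1"
      by blast
    moreover have "(tsize B + 1) * (tsize A + 1) = (tsize A + 1) * (tsize B + 1)" by (rule mult.commute)
    ultimately have "bst F B \<and> bst H A \<and> (tsize B + 1) * (tsize A + 1) \<le> tsize (Node x T1 T2) + 1"
      by (simp only: tsize.simps)
    then show ?thesis by blast
  qed
qed

lemma tsize_graft: "tsize (graft T S) + 1 = (tsize T + 1) * (tsize S + 1)"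
  by (induction T) (auto simp: algebra_simps)

theorem lemma5:
  fixes F H :: "'v cnf" and TF TH :: "'v tree"
  assumes "is_cnf F" and "is_cnf H"
    and "Var F \<inter> Var H = {}"
    and "\<not> satisfiable F" and "\<not> satisfiable H"
    and "optimal_bst F TF" and "optimal_bst H TH"
  shows "optimal_bst (product F H) (graft TF TH)"
proof -
  have bF: "bst F TF" and oF: "\<And>T'. bst F T' \<Longrightarrow> tsize TF \<le> tsize T'"
    using assms(6) unfolding optimal_bst_def by auto
  have bH: "bst H TH" and oH: "\<And>T'. bst H T' \<Longrightarrow> tsize TH \<le> tsize T'"
    using assms(7) unfolding optimal_bst_def by auto
  have "H \<noteq> {}"
  proof
    assume "H = {}"
    then have "satisfiable H" unfolding satisfiable_def by simp
    then show False using assms(5) by simp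
  qed
  have b: "bst (product F H) (graft TF TH)"
    by (rule lemB[OF bF \<open>H \<noteq> {}\<close> assms(3) bH])
  have "tsize (graft TF TH) \<le> tsize T'" if hT: "bst (product F H) T'" for T'
  proof -
    obtain A B where AB: "bst F A" "bst H B" "(tsize A + 1) * (tsize B + 1) \<le> tsize T' + 1"
      using lemC[OF hT refl assms(3)] by blast
    have "tsize TF \<le> tsize A" "tsize TH \<le> tsize B"
      using oF[OF AB(1)] oH[OF AB(2)] by auto
    then have "(tsize TF + 1) * (tsize TH + 1) \<le> (tsize A + 1) * (tsize B + 1)"
      by (intro mult_le_mono) auto
    then show ?thesis using AB(3) tsize_graft[of TF TH] by linarith
  qed
  then show ?thesis using b unfolding optimal_bst_def by blast
qed

end
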